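(* Let $H$ be a Hopf algebra over $\mathbb{C}$ with antipode $S$ and $A$ a left $H$-module algebra. On the Kadison bialgebroid $(A\otimes A^{op})\bowtie H$ (underlying space $A\otimes A\otimes H$) with product $(a\otimes b\otimes h)(a'\otimes b'\otimes h')=a(h_{(1)}\triangleright a')\otimes b'(S(h'_{(2)})\triangleright b)\otimes h_{(2)}h'_{(1)}$, source $a\mapsto a\otimes1\otimes1$, target $a\mapsto1\otimes a\otimes1$, coproduct $(a\otimes b)\otimes h\mapsto((a\otimes1)\otimes h_{(1)})\otimes_A((1\otimes b)\otimes h_{(2)})$ and counit $(a\otimes b)\otimes h\mapsto a(h\triangleright b)$, the map $\nu:\mathcal K\otimes_{A^{op}}\mathcal K\to\mathcal K\otimes_A\mathcal K$, $(a\otimes b\otimes h)\otimes(a'\otimes b'\otimes h')\mapsto(a\otimes1\otimes h_{(1)})\otimes_A\big((h_{(2)}\triangleright a')\otimes b'(S(h'_{(2)})\triangleright b)\otimes h_{(3)}h'_{(1)}\big)$, is bijective, with inverse $(a\otimes b\otimes h)\otimes_A(a'\otimes b'\otimes h')\mapsto(a\otimes1\otimes h_{(1)})\otimes_{A^{op}}\big((b\otimes1\otimes S(h_{(2)}))\cdot(a'\otimes b'\otimes h')\big)$. Hence $(A\otimes A^{op})\bowtie H$ is a left $\times_A$-Hopf algebra.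
   Context: A left $R$-bialgebroid is a $\mathbb{C}$-algebra $\mathcal K$ with algebra maps $\mathfrak s:R\to\mathcal K$ (source), $\mathfrak t:R^{op}\to\mathcal K$ (target) with commuting ranges, $R$-bimodule structure $r_1\cdot k\cdot r_2=\mathfrak s(r_1)\mathfrak t(r_2)k$, and $R$-bimodule maps $\Delta(k)=k_{(1)}\otimes_R k_{(2)}$, $\varepsilon:\mathcal K\to R$ forming a coassociative counital $R$-coring, with $k_{(1)}\mathfrak t(r)\otimes_R k_{(2)}=k_{(1)}\otimes_R k_{(2)}\mathfrak s(r)$, $\Delta(1)=1\otimes_R1$, $\Delta(kk')=k_{(1)}k'_{(1)}\otimes_R k_{(2)}k'_{(2)}$, $\varepsilon(1)=1_R$, $\varepsilon(kk')=\varepsilon(k\mathfrak s(\varepsilon(k')))$. It is a left $\times_R$-Hopf algebra if $\nu:\mathcal K\otimes_{R^{op}}\mathcal K\to\mathcal K\otimes_R\mathcal K$, $k\otimes k'\mapsto k_{(1)}\otimes_R k_{(2)}k'$, is bijective, where the domain is balanced by $k\mathfrak t(r)\otimes k'=k\otimes\mathfrak t(r)k'$. Here $\mathcal K=(A\otimes A^{op})\bowtie H$ and $R=A$. The Kadison structure is taken as a left $A$-bialgebroid (Kadison). *)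

theory Defs
  imports Complex_Main
begin

locale calg = module sc
  for sc :: "complex \<Rightarrow> 'a::{ring,monoid_mult} \<Rightarrow> 'a" +
  assumes scale_mult_left: "sc c (x * y) = sc c x * y"
      and scale_mult_right: "sc c (x * y) = x * sc c y"

text \<open>Elements of a tensor product are represented by finite lists of simple
  tensors (scalars absorbed in the first factor). Two representatives are equal in
  the tensor product iff every multilinear (resp. balanced multilinear) complex
  valued functional agrees on them (functionals separate points of the quotient).\<close>

definition lin_c :: "(complex \<Rightarrow> 'a::ab_group_add \<Rightarrow> 'a) \<Rightarrow> ('a \<Rightarrow> complex) \<Rightarrow> bool" where
  "lin_c s f \<longleftrightarrow> (\<forall>x y. f (x + y) = f x + f y) \<and> (\<forall>c x. f (s c x) = c * f x)"

definition bilin_c where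
  "bilin_c s1 s2 (\<phi> :: 'a::ab_group_add \<Rightarrow> 'b::ab_group_add \<Rightarrow> complex) \<longleftrightarrow>
     (\<forall>b. lin_c s1 (\<lambda>a. \<phi> a b)) \<and> (\<forall>a. lin_c s2 (\<lambda>b. \<phi> a b))"

definition trilin_c where
  "trilin_c s1 s2 s3 (\<phi> :: 'a::ab_group_add \<Rightarrow> 'b::ab_group_add \<Rightarrow> 'c::ab_group_add \<Rightarrow> complex) \<longleftrightarrow>
     (\<forall>b c. lin_c s1 (\<lambda>a. \<phi> a b c)) \<and> (\<forall>a c. lin_c s2 (\<lambda>b. \<phi> a b c))
     \<and> (\<forall>a b. lin_c s3 (\<lambda>c. \<phi> a b c))"

definition teq2 where
  "teq2 s1 s2 (xs :: ('a::ab_group_add \<times> 'b::ab_group_add) list) ys \<longleftrightarrow>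
     (\<forall>\<phi>. bilin_c s1 s2 \<phi> \<longrightarrow>
        (\<Sum>(a,b)\<leftarrow>xs. \<phi> a b) = (\<Sum>(a,b)\<leftarrow>ys. \<phi> a b))"

definition teq3 where
  "teq3 s1 s2 s3 (xs :: ('a::ab_group_add \<times> 'b::ab_group_add \<times> 'c::ab_group_add) list) ys \<longleftrightarrow>
     (\<forall>\<phi>. trilin_c s1 s2 s3 \<phi> \<longrightarrow>
        (\<Sum>(a,b,c)\<leftarrow>xs. \<phi> a b c) = (\<Sum>(a,b,c)\<leftarrow>ys. \<phi> a b c))"

text \<open>A Hopf algebra over the complex numbers. The coproduct is given by a
  representative Sweedler sum (list of pairs) of the element of H tensor H.\<close>

locale hopf_alg = calg sH
  for sH :: "complex \<Rightarrow> 'h::{ring,monoid_mult} \<Rightarrow> 'h" +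
  fixes \<Delta> :: "'h \<Rightarrow> ('h \<times> 'h) list"
    and \<epsilon> :: "'h \<Rightarrow> complex"
    and S :: "'h \<Rightarrow> 'h"
  assumes cop_add: "teq2 sH sH (\<Delta> (x + y)) (\<Delta> x @ \<Delta> y)"
      and cop_scale: "teq2 sH sH (\<Delta> (sH c x)) (map (\<lambda>(u,v). (sH c u, v)) (\<Delta> x))"
      and cop_coassoc: "teq3 sH sH sH
            (concat (map (\<lambda>(x,y). map (\<lambda>(u,v). (u,v,y)) (\<Delta> x)) (\<Delta> h)))
            (concat (map (\<lambda>(x,y). map (\<lambda>(u,v). (x,u,v)) (\<Delta> y)) (\<Delta> h)))"
      and cop_mult: "teq2 sH sH (\<Delta> (x * y))
            (concat (map (\<lambda>(a,b). map (\<lambda>(c,d). (a * c, b * d)) (\<Delta> y)) (\<Delta> x)))"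
      and cop_one: "teq2 sH sH (\<Delta> 1) [(1, 1)]"
      and counit_add: "\<epsilon> (x + y) = \<epsilon> x + \<epsilon> y"
      and counit_scale: "\<epsilon> (sH c x) = c * \<epsilon> x"
      and counit_mult: "\<epsilon> (x * y) = \<epsilon> x * \<epsilon> y"
      and counit_one: "\<epsilon> 1 = 1"
      and counit_left: "(\<Sum>(a,b)\<leftarrow>\<Delta> h. sH (\<epsilon> a) b) = h"
      and counit_right: "(\<Sum>(a,b)\<leftarrow>\<Delta> h. sH (\<epsilon> b) a) = h"
      and antipode_add: "S (x + y) = S x + S y"
      and antipode_scale: "S (sH c x) = sH c (S x)"
      and antipode_left: "(\<Sum>(a,b)\<leftarrow>\<Delta> h. S a * b) = sH (\<epsilon> h) 1"
      and antipode_right: "(\<Sum>(a,b)\<leftarrow>\<Delta> h. a * S b) = sH (\<epsilon> h) 1"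

locale module_alg = hopf_alg sH \<Delta> \<epsilon> S + A: calg sA
  for sH :: "complex \<Rightarrow> 'h::{ring,monoid_mult} \<Rightarrow> 'h"
  and \<Delta> \<epsilon> S
  and sA :: "complex \<Rightarrow> 'a::{ring,monoid_mult} \<Rightarrow> 'a" +
  fixes act :: "'h \<Rightarrow> 'a \<Rightarrow> 'a"
  assumes act_add_left: "act (h + k) x = act h x + act k x"
      and act_scale_left: "act (sH c h) x = sA c (act h x)"
      and act_add_right: "act h (x + y) = act h x + act h y"
      and act_scale_right: "act h (sA c x) = sA c (act h x)"
      and act_one: "act 1 x = x"
      and act_mult: "act (h * k) x = act h (act k x)"
      and act_prod: "act h (x * y) = (\<Sum>(h1,h2)\<leftarrow>\<Delta> h. act h1 x * act h2 y)"
      and act_unit: "act h 1 = sA (\<epsilon> h) 1"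

text \<open>Elements of K = A \<otimes> A \<otimes> H are lists of triples (a,b,h).\<close>

definition kmul1 ::
  "('h \<Rightarrow> ('h \<times> 'h) list) \<Rightarrow> ('h \<Rightarrow> 'h) \<Rightarrow> ('h \<Rightarrow> 'a \<Rightarrow> 'a)
   \<Rightarrow> ('a::{ring,monoid_mult} \<times> 'a \<times> 'h::{ring,monoid_mult})
   \<Rightarrow> ('a \<times> 'a \<times> 'h) \<Rightarrow> ('a \<times> 'a \<times> 'h) list" where
  "kmul1 \<Delta> S act k k' = (case k of (a,b,h) \<Rightarrow> case k' of (a',b',h') \<Rightarrow>
     concat (map (\<lambda>(h1,h2). map (\<lambda>(h1',h2').
        (a * act h1 a', b' * act (S h2') b, h2 * h1')) (\<Delta> h')) (\<Delta> h)))"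

definition kmul where
  "kmul \<Delta> S act xs ys = concat (map (\<lambda>x. concat (map (\<lambda>y. kmul1 \<Delta> S act x y) ys)) xs)"

definition ksrc :: "'a \<Rightarrow> ('a::{ring,monoid_mult} \<times> 'a \<times> 'h::{ring,monoid_mult}) list" where
  "ksrc r = [(r, 1, 1)]"

definition ktgt :: "'a \<Rightarrow> ('a::{ring,monoid_mult} \<times> 'a \<times> 'h::{ring,monoid_mult}) list" where
  "ktgt r = [(1, r, 1)]"

definition kdelta ::
  "('h \<Rightarrow> ('h \<times> 'h) list) \<Rightarrow> ('a::{ring,monoid_mult} \<times> 'a \<times> 'h::{ring,monoid_mult})
   \<Rightarrow> (('a \<times> 'a \<times> 'h) \<times> ('a \<times> 'a \<times> 'h)) list" where
  "kdelta \<Delta> k = (case k of (a,b,h) \<Rightarrow> map (\<lambda>(h1,h2). ((a,1,h1),(1,b,h2))) (\<Delta> h))"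

definition ktens :: "'k list \<Rightarrow> 'k list \<Rightarrow> ('k \<times> 'k) list" where
  "ktens xs ys = concat (map (\<lambda>x. map (\<lambda>y. (x,y)) ys) xs)"

definition multilin6 where
  "multilin6 sA sH (\<phi> :: 'a::ab_group_add \<Rightarrow> 'a \<Rightarrow> 'h::ab_group_add \<Rightarrow> 'a \<Rightarrow> 'a \<Rightarrow> 'h \<Rightarrow> complex) \<longleftrightarrow>
     (\<forall>b h a' b' h'. lin_c sA (\<lambda>a. \<phi> a b h a' b' h')) \<and>
     (\<forall>a h a' b' h'. lin_c sA (\<lambda>b. \<phi> a b h a' b' h')) \<and>
     (\<forall>a b a' b' h'. lin_c sH (\<lambda>h. \<phi> a b h a' b' h')) \<and>
     (\<forall>a b h b' h'. lin_c sA (\<lambda>a'. \<phi> a b h a' b' h')) \<and>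
     (\<forall>a b h a' h'. lin_c sA (\<lambda>b'. \<phi> a b h a' b' h')) \<and>
     (\<forall>a b h a' b'. lin_c sH (\<lambda>h'. \<phi> a b h a' b' h'))"

definition Phi where
  "Phi \<phi> xs = (\<Sum>((a,b,h),(a',b',h'))\<leftarrow>xs. \<phi> a b h a' b' h')"

text \<open>K \<otimes>_A K: balanced by (k \<cdot> r) \<otimes> k' = k \<otimes> (r \<cdot> k'),
  where k \<cdot> r = t(r) k and r \<cdot> k' = s(r) k'.\<close>
definition teqA where
  "teqA sA sH \<Delta> S act xs ys \<longleftrightarrow>
     (\<forall>\<phi>. multilin6 sA sH \<phi> \<and>
        (\<forall>k k' r. Phi \<phi> (ktens (kmul \<Delta> S act (ktgt r) k) k')
                 = Phi \<phi> (ktens k (kmul \<Delta> S act (ksrc r) k')))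
        \<longrightarrow> Phi \<phi> xs = Phi \<phi> ys)"

text \<open>K \<otimes>_{A^op} K: balanced by k t(r) \<otimes> k' = k \<otimes> t(r) k'.\<close>
definition teqAop where
  "teqAop sA sH \<Delta> S act xs ys \<longleftrightarrow>
     (\<forall>\<phi>. multilin6 sA sH \<phi> \<and>
        (\<forall>k k' r. Phi \<phi> (ktens (kmul \<Delta> S act k (ktgt r)) k')
                 = Phi \<phi> (ktens k (kmul \<Delta> S act (ktgt r) k')))
        \<longrightarrow> Phi \<phi> xs = Phi \<phi> ys)"

definition nu where
  "nu \<Delta> S act xs = concat (map (\<lambda>(k,k').
      concat (map (\<lambda>(k1,k2). map (\<lambda>z. (k1, z)) (kmul \<Delta> S act [k2] [k'])) (kdelta \<Delta> k))) xs)"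

definition nu_expl where
  "nu_expl \<Delta> S act xs = concat (map (\<lambda>((a,b,h),(a',b',h')).
      concat (map (\<lambda>(h1,y). concat (map (\<lambda>(h2,h3). map (\<lambda>(g1,g2).
          ((a, 1, h1), (act h2 a', b' * act (S g2) b, h3 * g1))) (\<Delta> h')) (\<Delta> y))) (\<Delta> h))) xs)"

definition nu_inv where
  "nu_inv \<Delta> S act xs = concat (map (\<lambda>((a,b,h),(a',b',h')).
      concat (map (\<lambda>(h1,h2). map (\<lambda>z. ((a, 1, h1), z))
         (kmul \<Delta> S act [(b, 1, S h2)] [(a', b', h')])) (\<Delta> h))) xs)"

end

theory Submission
  imports Defs
begin


lemma lin_c_add: "lin_c s f \<Longrightarrow> f (x+y) = f x + f y" by (simp add: lin_c_def)
lemma lin_c_scale: "lin_c s f \<Longrightarrow> f (s c x) = c * f x" by (simp add: lin_c_def)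
lemma lin_c_zero: "lin_c s f \<Longrightarrow> f 0 = 0"
proof -
  assume "lin_c s f"
  then have "f (0+0) = f 0 + f 0" by (rule lin_c_add)
  then show ?thesis by simp
qed
lemma lin_c_sum_list: "lin_c s f \<Longrightarrow> f (sum_list (map g xs)) = (\<Sum>x\<leftarrow>xs. f (g x))"
  by (induction xs) (auto simp: lin_c_add lin_c_zero)

lemma sum_list_concat': "sum_list (concat xss) = sum_list (map sum_list xss)"
  by (induction xss) auto

definition sw :: "('h \<Rightarrow> ('h \<times> 'h) list) \<Rightarrow> 'h \<Rightarrow> ('h \<Rightarrow> 'h \<Rightarrow> complex) \<Rightarrow> complex" where
  "sw D h G = (\<Sum>(a,b)\<leftarrow>D h. G a b)"

lemma sum2_add: "(\<Sum>(a,b)\<leftarrow>xs. F a b + G a b) = (\<Sum>(a,b)\<leftarrow>xs. F a b) + (\<Sum>(a,b)\<leftarrow>xs. (G a b::'z::comm_monoid_add))"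
  by (induction xs) (auto simp: algebra_simps)
lemma sum2_cmult: "(\<Sum>(a,b)\<leftarrow>xs. c * F a b) = c * (\<Sum>(a,b)\<leftarrow>xs. (F a b::'z::semiring_0))"
  by (induction xs) (auto simp: algebra_simps)
lemma sum2_multc: "(\<Sum>(a,b)\<leftarrow>xs. F a b * c) = (\<Sum>(a,b)\<leftarrow>xs. (F a b::'z::semiring_0)) * c"
  by (induction xs) (auto simp: algebra_simps)

lemma sw_add_fun[simp]: "sw D h (\<lambda>a b. F a b + G a b) = sw D h F + sw D h G"
  unfolding sw_def by (rule sum2_add)
lemma sw_cmult[simp]: "sw D h (\<lambda>a b. c * F a b) = c * sw D h F"
  unfolding sw_def by (rule sum2_cmult)
lemma sw_multc[simp]: "sw D h (\<lambda>a b. F a b * c) = sw D h F * c"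
  unfolding sw_def by (rule sum2_multc)
lemma sw_zero[simp]: "sw D h (\<lambda>a b. 0) = 0"
  unfolding sw_def by (induction "D h") auto

lemma sum2_swap: "(\<Sum>(a,b)\<leftarrow>xs. (\<Sum>(c,d)\<leftarrow>ys. F a b c d)) = (\<Sum>(c,d)\<leftarrow>ys. (\<Sum>(a,b)\<leftarrow>xs. (F a b c d::'z::comm_monoid_add)))"
  by (induction xs) (auto simp: sum2_add)

lemma sw_swap: "sw D x (\<lambda>a b. sw D' y (\<lambda>c d. F a b c d)) = sw D' y (\<lambda>c d. sw D x (\<lambda>a b. F a b c d))"
  unfolding sw_def by (rule sum2_swap)

context hopf_alg begin

lemma Sadd: assumes "bilin_c sH sH G" shows "sw \<Delta> (x+y) G = sw \<Delta> x G + sw \<Delta> y G"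
  using cop_add[of x y] assms unfolding teq2_def sw_def by simp

lemma Ssc: assumes "bilin_c sH sH G" shows "sw \<Delta> (sH c x) G = c * sw \<Delta> x G"
proof -
  have "sw \<Delta> (sH c x) G = (\<Sum>(a,b)\<leftarrow>map (\<lambda>(u,v). (sH c u, v)) (\<Delta> x). G a b)"
    using cop_scale[of c x] assms unfolding teq2_def sw_def by blast
  also have "\<dots> = (\<Sum>(a,b)\<leftarrow>\<Delta> x. c * G a b)"
    using assms unfolding bilin_c_def lin_c_def by (simp add: o_def split_def)
  finally show ?thesis by (simp add: sw_def sum2_cmult)
qed


lemma Scoassoc: assumes "trilin_c sH sH sH T"
  shows "sw \<Delta> h (\<lambda>x y. sw \<Delta> x (\<lambda>u v. T u v y)) = sw \<Delta> h (\<lambda>x y. sw \<Delta> y (\<lambda>u v. T x u v))"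
  using cop_coassoc[of h] assms unfolding teq3_def sw_def
  by (simp add: sum_list_concat' map_concat o_def split_def)

lemma Smult: assumes "bilin_c sH sH G"
  shows "sw \<Delta> (x*y) G = sw \<Delta> x (\<lambda>a b. sw \<Delta> y (\<lambda>c d. G (a*c) (b*d)))"
  using cop_mult[of x y] assms unfolding teq2_def sw_def
  by (simp add: sum_list_concat' map_concat o_def split_def)

lemma Sone: assumes "bilin_c sH sH G" shows "sw \<Delta> 1 G = G 1 1"
  using cop_one assms unfolding teq2_def sw_def by simp

lemma Cl: assumes "lin_c sH F" shows "sw \<Delta> h (\<lambda>a b. \<epsilon> a * F b) = F h"
proof -
  have "F h = F (\<Sum>(a,b)\<leftarrow>\<Delta> h. sH (\<epsilon> a) b)" using counit_left[of h] by simp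
  also have "\<dots> = (\<Sum>(a,b)\<leftarrow>\<Delta> h. F (sH (\<epsilon> a) b))"
    using lin_c_sum_list[OF assms] by (simp add: split_def)
  finally show ?thesis using assms by (simp add: sw_def lin_c_def)
qed

lemma Cr: assumes "lin_c sH F" shows "sw \<Delta> h (\<lambda>a b. \<epsilon> b * F a) = F h"
proof -
  have "F h = F (\<Sum>(a,b)\<leftarrow>\<Delta> h. sH (\<epsilon> b) a)" using counit_right[of h] by simp
  also have "\<dots> = (\<Sum>(a,b)\<leftarrow>\<Delta> h. F (sH (\<epsilon> b) a))"
    using lin_c_sum_list[OF assms] by (simp add: split_def)
  finally show ?thesis using assms by (simp add: sw_def lin_c_def)
qed

lemma Al: assumes "lin_c sH F" shows "sw \<Delta> h (\<lambda>a b. F (S a * b)) = \<epsilon> h * F 1"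
proof -
  have "\<epsilon> h * F 1 = F (\<Sum>(a,b)\<leftarrow>\<Delta> h. S a * b)" using antipode_left[of h] assms by (simp add: lin_c_def)
  also have "\<dots> = (\<Sum>(a,b)\<leftarrow>\<Delta> h. F (S a * b))"
    using lin_c_sum_list[OF assms] by (simp add: split_def)
  finally show ?thesis by (simp add: sw_def)
qed

lemma Ar: assumes "lin_c sH F" shows "sw \<Delta> h (\<lambda>a b. F (a * S b)) = \<epsilon> h * F 1"
proof -
  have "\<epsilon> h * F 1 = F (\<Sum>(a,b)\<leftarrow>\<Delta> h. a * S b)" using antipode_right[of h] assms by (simp add: lin_c_def)
  also have "\<dots> = (\<Sum>(a,b)\<leftarrow>\<Delta> h. F (a * S b))"
    using lin_c_sum_list[OF assms] by (simp add: split_def)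
  finally show ?thesis by (simp add: sw_def)
qed

lemma lin_eps: "lin_c sH \<epsilon>" by (simp add: lin_c_def counit_add counit_scale)

lemma ES: "\<epsilon> (S h) = \<epsilon> h"
proof -
  have l: "lin_c sH (\<lambda>x. \<epsilon> (S x))" by (simp add: lin_c_def counit_add counit_scale antipode_add antipode_scale)
  have "\<epsilon> h = \<epsilon> h * \<epsilon> 1" by (simp add: counit_one)
  also have "\<dots> = sw \<Delta> h (\<lambda>a b. \<epsilon> (S a * b))" using Al[OF lin_eps] by simp
  also have "\<dots> = sw \<Delta> h (\<lambda>a b. \<epsilon> b * \<epsilon> (S a))" by (simp add: counit_mult mult.commute)
  also have "\<dots> = \<epsilon> (S h)" using Cr[OF l] by simp
  finally show ?thesis by simp
qed

lemma S1: assumes "lin_c sH F" shows "F (S 1) = F 1"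
proof -
  have b: "bilin_c sH sH (\<lambda>a b. F (S a * b))" using assms
    by (simp add: bilin_c_def lin_c_def antipode_add antipode_scale distrib_left distrib_right
        scale_mult_left[symmetric] scale_mult_right[symmetric])
  have "F 1 = sw \<Delta> 1 (\<lambda>a b. F (S a * b))" using Al[OF assms] by (simp add: counit_one)
  also have "\<dots> = F (S 1)" using Sone[OF b] by simp
  finally show ?thesis by simp
qed


lemmas Hlin = lin_c_def bilin_c_def trilin_c_def distrib_left distrib_right
  scale_mult_left[symmetric] scale_mult_right[symmetric] antipode_add antipode_scale
  counit_add counit_scale Sadd Ssc

lemma LemE: assumes K: "bilin_c sH sH K"
  shows "sw \<Delta> q (\<lambda>c d. sw \<Delta> c (\<lambda>c1 c2. sw \<Delta> d (\<lambda>d1 d2. K (c1 * S d2) (c2 * S d1)))) = \<epsilon> q * K 1 1"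
proof -
  have K': "\<And>x y b. K (x+y) b = K x b + K y b" "\<And>c x b. K (sH c x) b = c * K x b"
    "\<And>x y a. K a (x+y) = K a x + K a y" "\<And>c x a. K a (sH c x) = c * K a x"
    using K by (auto simp: bilin_c_def lin_c_def)
  have e1: "sw \<Delta> q (\<lambda>c d. sw \<Delta> c (\<lambda>c1 c2. sw \<Delta> d (\<lambda>d1 d2. K (c1 * S d2) (c2 * S d1))))
      = sw \<Delta> q (\<lambda>c1 y. sw \<Delta> y (\<lambda>c2 d. sw \<Delta> d (\<lambda>d1 d2. K (c1 * S d2) (c2 * S d1))))"
    by (rule Scoassoc[where T="\<lambda>c1 c2 d. sw \<Delta> d (\<lambda>d1 d2. K (c1 * S d2) (c2 * S d1))"]) (simp add: Hlin K')
  have e2: "\<And>c1 y. sw \<Delta> y (\<lambda>c2 d. sw \<Delta> d (\<lambda>d1 d2. K (c1 * S d2) (c2 * S d1)))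
      = sw \<Delta> y (\<lambda>z d2. sw \<Delta> z (\<lambda>c2 d1. K (c1 * S d2) (c2 * S d1)))"
    by (rule Scoassoc[where T="\<lambda>c2 d1 d2. K (c1 * S d2) (c2 * S d1)" for c1, symmetric]) (simp add: Hlin K')
  have e3: "\<And>c1 z d2. sw \<Delta> z (\<lambda>c2 d1. K (c1 * S d2) (c2 * S d1)) = \<epsilon> z * K (c1 * S d2) 1"
    by (rule Ar[where F="\<lambda>m. K (c1 * S d2) m" for c1 d2]) (simp add: Hlin K')
  have e4: "\<And>c1 y. sw \<Delta> y (\<lambda>z d2. \<epsilon> z * K (c1 * S d2) 1) = K (c1 * S y) 1"
    by (rule Cl[where F="\<lambda>d2. K (c1 * S d2) 1" for c1]) (simp add: Hlin K')
  have e5: "sw \<Delta> q (\<lambda>c1 y. K (c1 * S y) 1) = \<epsilon> q * K 1 1"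
    by (rule Ar[where F="\<lambda>m. K m 1"]) (simp add: Hlin K')
  show ?thesis by (simp only: e1 e2 e3 e4 e5)
qed


lemma Santi: assumes G: "bilin_c sH sH G"
  shows "sw \<Delta> (S h) G = sw \<Delta> h (\<lambda>a b. G (S b) (S a))"
proof -
  have G': "\<And>x y b. G (x+y) b = G x b + G y b" "\<And>c x b. G (sH c x) b = c * G x b"
    "\<And>x y a. G a (x+y) = G a x + G a y" "\<And>c x a. G a (sH c x) = c * G a x"
    using G by (auto simp: bilin_c_def lin_c_def)
  have e2: "\<And>x q. \<epsilon> q * sw \<Delta> (S x) G = sw \<Delta> q (\<lambda>c d. sw \<Delta> c (\<lambda>c1 c2. sw \<Delta> d (\<lambda>d1 d2.
           sw \<Delta> (S x) (\<lambda>s1 s2. G (s1*(c1*S d2)) (s2*(c2*S d1))))))"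
  proof -
    fix x q
    have "sw \<Delta> q (\<lambda>c d. sw \<Delta> c (\<lambda>c1 c2. sw \<Delta> d (\<lambda>d1 d2.
           sw \<Delta> (S x) (\<lambda>s1 s2. G (s1*(c1*S d2)) (s2*(c2*S d1)))))) = \<epsilon> q * sw \<Delta> (S x) (\<lambda>s1 s2. G (s1*1) (s2*1))"
      by (rule LemE[where K="\<lambda>u v. sw \<Delta> (S x) (\<lambda>s1 s2. G (s1*u) (s2*v))"]) (simp add: Hlin G')
    then show "?thesis x q" by simp
  qed
  have e4: "\<And>w d. sw \<Delta> w (\<lambda>x c. sw \<Delta> c (\<lambda>c1 c2. sw \<Delta> d (\<lambda>d1 d2.
           sw \<Delta> (S x) (\<lambda>s1 s2. G (s1*(c1*S d2)) (s2*(c2*S d1)))))) = \<epsilon> w * sw \<Delta> d (\<lambda>d1 d2. G (S d2) (S d1))"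
  proof -
    fix w d
    have m: "\<And>x c. sw \<Delta> c (\<lambda>c1 c2. sw \<Delta> d (\<lambda>d1 d2.
           sw \<Delta> (S x) (\<lambda>s1 s2. G (s1*(c1*S d2)) (s2*(c2*S d1))))) = 
         sw \<Delta> (S x * c) (\<lambda>m1 m2. sw \<Delta> d (\<lambda>d1 d2. G (m1 * S d2) (m2 * S d1)))"
    proof -
      fix x c
      have "sw \<Delta> (S x * c) (\<lambda>m1 m2. sw \<Delta> d (\<lambda>d1 d2. G (m1 * S d2) (m2 * S d1)))
         = sw \<Delta> (S x) (\<lambda>s1 s2. sw \<Delta> c (\<lambda>c1 c2. sw \<Delta> d (\<lambda>d1 d2. G ((s1*c1) * S d2) ((s2*c2) * S d1))))"
        by (rule Smult) (simp add: Hlin G')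
      also have "\<dots> = sw \<Delta> c (\<lambda>c1 c2. sw \<Delta> (S x) (\<lambda>s1 s2. sw \<Delta> d (\<lambda>d1 d2. G ((s1*c1) * S d2) ((s2*c2) * S d1))))"
        by (rule sw_swap)
      also have "\<dots> = sw \<Delta> c (\<lambda>c1 c2. sw \<Delta> d (\<lambda>d1 d2. sw \<Delta> (S x) (\<lambda>s1 s2. G ((s1*c1) * S d2) ((s2*c2) * S d1))))"
        by (subst sw_swap) (rule refl)
      finally show "?thesis x c" by (simp add: mult.assoc)
    qed
    have "sw \<Delta> w (\<lambda>x c. sw \<Delta> (S x * c) (\<lambda>m1 m2. sw \<Delta> d (\<lambda>d1 d2. G (m1 * S d2) (m2 * S d1))))
       = \<epsilon> w * sw \<Delta> 1 (\<lambda>m1 m2. sw \<Delta> d (\<lambda>d1 d2. G (m1 * S d2) (m2 * S d1)))"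
      by (rule Al[where F="\<lambda>m. sw \<Delta> m (\<lambda>m1 m2. sw \<Delta> d (\<lambda>d1 d2. G (m1 * S d2) (m2 * S d1)))"]) (simp add: Hlin G')
    also have "sw \<Delta> 1 (\<lambda>m1 m2. sw \<Delta> d (\<lambda>d1 d2. G (m1 * S d2) (m2 * S d1))) = sw \<Delta> d (\<lambda>d1 d2. G (S d2) (S d1))"
      by (subst Sone) (simp_all add: Hlin G')
    finally show "?thesis w d" by (simp only: m)
  qed
  have "sw \<Delta> (S h) G = sw \<Delta> h (\<lambda>x q. \<epsilon> q * sw \<Delta> (S x) G)"
    by (rule Cr[symmetric]) (simp add: Hlin G')
  also have "\<dots> = sw \<Delta> h (\<lambda>x q. sw \<Delta> q (\<lambda>c d. sw \<Delta> c (\<lambda>c1 c2. sw \<Delta> d (\<lambda>d1 d2.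
           sw \<Delta> (S x) (\<lambda>s1 s2. G (s1*(c1*S d2)) (s2*(c2*S d1)))))))"
    by (simp only: e2)
  also have "\<dots> = sw \<Delta> h (\<lambda>w d. sw \<Delta> w (\<lambda>x c. sw \<Delta> c (\<lambda>c1 c2. sw \<Delta> d (\<lambda>d1 d2.
           sw \<Delta> (S x) (\<lambda>s1 s2. G (s1*(c1*S d2)) (s2*(c2*S d1)))))))"
    by (rule Scoassoc[symmetric]) (simp add: Hlin G')
  also have "\<dots> = sw \<Delta> h (\<lambda>w d. \<epsilon> w * sw \<Delta> d (\<lambda>d1 d2. G (S d2) (S d1)))"
    by (simp only: e4)
  also have "\<dots> = sw \<Delta> h (\<lambda>d1 d2. G (S d2) (S d1))"
    by (rule Cl) (simp add: Hlin G')
  finally show ?thesis .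
qed

end



lemma Phi_append: "Phi \<phi> (xs @ ys) = Phi \<phi> xs + Phi \<phi> ys"
  by (simp add: Phi_def)
lemma Phi_concat_map: "Phi \<phi> (concat (map f xs)) = (\<Sum>x\<leftarrow>xs. Phi \<phi> (f x))"
  by (induction xs) (simp_all add: Phi_def)
lemma Phi_Cons: "Phi \<phi> (x # xs) = Phi \<phi> [x] + Phi \<phi> xs"
  by (simp add: Phi_def)

lemma nu_concat: "nu D S act xs = concat (map (\<lambda>e. nu D S act [e]) xs)"
  by (simp add: nu_def)
lemma nu_inv_concat: "nu_inv D S act xs = concat (map (\<lambda>e. nu_inv D S act [e]) xs)"
  by (simp add: nu_inv_def)
lemma nu_expl_concat: "nu_expl D S act xs = concat (map (\<lambda>e. nu_expl D S act [e]) xs)"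
  by (simp add: nu_expl_def)
lemma nu_append: "nu D S act (xs @ ys) = nu D S act xs @ nu D S act ys"
  by (simp add: nu_def)
lemma nu_inv_append: "nu_inv D S act (xs @ ys) = nu_inv D S act xs @ nu_inv D S act ys"
  by (simp add: nu_inv_def)

lemma Phi_as_sum: "Phi \<phi> xs = (\<Sum>e\<leftarrow>xs. Phi \<phi> [e])"
  by (induction xs) (simp_all add: Phi_def)

lemma Phi_nu1: "Phi \<phi> (nu D S act [((a,b,h),(a',b',h'))]) =
  sw D h (\<lambda>h1 h2. sw D h2 (\<lambda>p1 p2. sw D h' (\<lambda>g1 g2. \<phi> a 1 h1 (1 * act p1 a') (b' * act (S g2) b) (p2 * g1))))"
  by (simp add: Phi_def nu_def kdelta_def kmul_def kmul1_def sw_def sum_list_concat' map_concat split_def o_def)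

lemma Phi_nu_expl1: "Phi \<phi> (nu_expl D S act [((a,b,h),(a',b',h'))]) =
  sw D h (\<lambda>h1 y. sw D y (\<lambda>h2 h3. sw D h' (\<lambda>g1 g2. \<phi> a 1 h1 (act h2 a') (b' * act (S g2) b) (h3 * g1))))"
  by (simp add: Phi_def nu_expl_def sw_def sum_list_concat' map_concat split_def o_def)

lemma Phi_nu_inv1: "Phi \<phi> (nu_inv D S act [((a,b,h),(a',b',h'))]) =
  sw D h (\<lambda>h1 h2. sw D (S h2) (\<lambda>s1 s2. sw D h' (\<lambda>g1 g2. \<phi> a 1 h1 (b * act s1 a') (b' * act (S g2) 1) (s2 * g1))))"
  by (simp add: Phi_def nu_inv_def kmul_def kmul1_def sw_def sum_list_concat' map_concat split_def o_def)

lemma Phi_L: "Phi \<phi> (ktens (kmul D S act [(a1,b1,h1)] [(a2,b2,h2)]) [(a3,b3,h3)]) =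
  sw D h1 (\<lambda>p1 p2. sw D h2 (\<lambda>g1 g2. \<phi> (a1 * act p1 a2) (b2 * act (S g2) b1) (p2*g1) a3 b3 h3))"
  by (simp add: Phi_def ktens_def kmul_def kmul1_def sw_def sum_list_concat' map_concat split_def o_def)

lemma Phi_R: "Phi \<phi> (ktens [(a1,b1,h1)] (kmul D S act [(a2,b2,h2)] [(a3,b3,h3)])) =
  sw D h2 (\<lambda>p1 p2. sw D h3 (\<lambda>g1 g2. \<phi> a1 b1 h1 (a2 * act p1 a3) (b3 * act (S g2) b2) (p2*g1)))"
  by (simp add: Phi_def ktens_def kmul_def kmul1_def sw_def sum_list_concat' map_concat split_def o_def)

lemma sum_list_swap: "(\<Sum>x\<leftarrow>xs. \<Sum>y\<leftarrow>ys. f x y) = (\<Sum>y\<leftarrow>ys. \<Sum>x\<leftarrow>xs. (f x y::'z::comm_monoid_add))"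
  by (induction xs) (simp_all add: sum_list_addf)

lemma Phi_ktens_split: "Phi (\<phi>::_\<Rightarrow>_\<Rightarrow>_\<Rightarrow>_\<Rightarrow>_\<Rightarrow>_\<Rightarrow>complex) (ktens ws zs) = (\<Sum>z\<leftarrow>zs. Phi \<phi> (ktens ws [z]))"
  apply (simp add: Phi_def ktens_def sum_list_concat' map_concat split_def o_def)
  apply (rule sum_list_swap)
  done

lemma Phi_Lgen: "Phi (\<phi>::_\<Rightarrow>_\<Rightarrow>_\<Rightarrow>_\<Rightarrow>_\<Rightarrow>_\<Rightarrow>complex) (ktens (kmul D S act xs ys) zs) =
  (\<Sum>x\<leftarrow>xs. \<Sum>y\<leftarrow>ys. \<Sum>z\<leftarrow>zs. Phi \<phi> (ktens (kmul D S act [x] [y]) [z]))"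
proof -
  have "Phi \<phi> (ktens (kmul D S act xs ys) zs) = (\<Sum>x\<leftarrow>xs. \<Sum>y\<leftarrow>ys. Phi \<phi> (ktens (kmul D S act [x] [y]) zs))"
    by (simp add: Phi_def ktens_def kmul_def sum_list_concat' map_concat split_def o_def)
  then show ?thesis by (subst (asm) Phi_ktens_split) simp
qed

lemma Phi_Rgen: "Phi \<phi> (ktens xs (kmul D S act ys zs)) =
  (\<Sum>x\<leftarrow>xs. \<Sum>y\<leftarrow>ys. \<Sum>z\<leftarrow>zs. Phi \<phi> (ktens [x] (kmul D S act [y] [z])))"
  by (simp add: Phi_def ktens_def kmul_def sum_list_concat' map_concat split_def o_def)




lemma ml6: assumes "multilin6 sA sH \<phi>"
  shows "\<phi> (x+y) b h a' b' h' = \<phi> x b h a' b' h' + \<phi> y b h a' b' h'"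
    "\<phi> (sA c x) b h a' b' h' = c * \<phi> x b h a' b' h'"
    "\<phi> a (x+y) h a' b' h' = \<phi> a x h a' b' h' + \<phi> a y h a' b' h'"
    "\<phi> a (sA c x) h a' b' h' = c * \<phi> a x h a' b' h'"
    "\<phi> a b (u+v) a' b' h' = \<phi> a b u a' b' h' + \<phi> a b v a' b' h'"
    "\<phi> a b (sH c u) a' b' h' = c * \<phi> a b u a' b' h'"
    "\<phi> a b h (x+y) b' h' = \<phi> a b h x b' h' + \<phi> a b h y b' h'"
    "\<phi> a b h (sA c x) b' h' = c * \<phi> a b h x b' h'"
    "\<phi> a b h a' (x+y) h' = \<phi> a b h a' x h' + \<phi> a b h a' y h'"
    "\<phi> a b h a' (sA c x) h' = c * \<phi> a b h a' x h'"
    "\<phi> a b h a' b' (u+v) = \<phi> a b h a' b' u + \<phi> a b h a' b' v"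
    "\<phi> a b h a' b' (sH c u) = c * \<phi> a b h a' b' u"
  using assms unfolding multilin6_def lin_c_def by auto

context module_alg begin

lemmas Alin = Hlin act_add_left act_scale_left act_add_right act_scale_right
  A.scale_mult_left[symmetric] A.scale_mult_right[symmetric]

lemma actP: assumes "lin_c sA f"
  shows "f (act h (x*y)) = sw \<Delta> h (\<lambda>u v. f (act u x * act v y))"
  unfolding act_prod sw_def using lin_c_sum_list[OF assms] by (simp add: split_def)

lemma C2: "teqA sA sH \<Delta> S act (nu_expl \<Delta> S act xs) (nu \<Delta> S act xs)"
proof -
  have "\<And>(\<phi>::'a\<Rightarrow>'a\<Rightarrow>'h\<Rightarrow>'a\<Rightarrow>'a\<Rightarrow>'h\<Rightarrow>complex) e. Phi \<phi> (nu_expl \<Delta> S act [e]) = Phi \<phi> (nu \<Delta> S act [e])"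
    by (case_tac e) (auto simp: Phi_nu1 Phi_nu_expl1)
  then show ?thesis unfolding teqA_def
    by (subst nu_expl_concat, subst nu_concat) (simp add: Phi_concat_map)
qed

lemma balA_from:
  assumes ml: "multilin6 sA sH \<phi>"
    and bal: "\<forall>k k' r. Phi \<phi> (ktens (kmul \<Delta> S act (ktgt r) k) k') = Phi \<phi> (ktens k (kmul \<Delta> S act (ksrc r) k'))"
  shows "sw \<Delta> h (\<lambda>g1 g2. \<phi> a (b * act (S g2) r) g1 a' b' h') = \<phi> a b h (r*a') b' h'"
proof -
  note m = ml6[OF ml]
  have "sw \<Delta> 1 (\<lambda>p1 p2. sw \<Delta> h (\<lambda>g1 g2. \<phi> (1 * act p1 a) (b * act (S g2) r) (p2*g1) a' b' h'))
      = sw \<Delta> 1 (\<lambda>p1 p2. sw \<Delta> h' (\<lambda>g1 g2. \<phi> a b h (r * act p1 a') (b' * act (S g2) 1) (p2*g1)))"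
    using bal[rule_format, of r "[(a,b,h)]" "[(a',b',h')]"] by (simp add: ktgt_def ksrc_def Phi_L Phi_R)
  also have "\<dots> = sw \<Delta> h' (\<lambda>g1 g2. \<phi> a b h (r * act 1 a') (b' * act (S g2) 1) (1*g1))"
    by (rule Sone) (simp add: Alin m)
  also have "\<dots> = sw \<Delta> h' (\<lambda>g1 g2. \<epsilon> g2 * \<phi> a b h (r * a') b' g1)"
    by (simp add: act_one act_unit ES A.scale_mult_right[symmetric] m)
  also have "\<dots> = \<phi> a b h (r * a') b' h'"
    by (rule Cr) (simp add: Alin m)
  finally have 1: "sw \<Delta> 1 (\<lambda>p1 p2. sw \<Delta> h (\<lambda>g1 g2. \<phi> (1 * act p1 a) (b * act (S g2) r) (p2*g1) a' b' h'))
     = \<phi> a b h (r * a') b' h'" .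
  have "sw \<Delta> 1 (\<lambda>p1 p2. sw \<Delta> h (\<lambda>g1 g2. \<phi> (1 * act p1 a) (b * act (S g2) r) (p2*g1) a' b' h'))
     = sw \<Delta> h (\<lambda>g1 g2. \<phi> (1 * act 1 a) (b * act (S g2) r) (1*g1) a' b' h')"
    by (rule Sone) (simp add: Alin m)
  then show ?thesis using 1 by (simp add: act_one)
qed

lemma balA_to:
  assumes ml: "multilin6 sA sH \<phi>"
    and s: "\<And>a b h a' b' h' r. sw \<Delta> h (\<lambda>g1 g2. \<phi> a (b * act (S g2) r) g1 a' b' h') = \<phi> a b h (r*a') b' h'"
  shows "\<forall>k k' r. Phi \<phi> (ktens (kmul \<Delta> S act (ktgt r) k) k') = Phi \<phi> (ktens k (kmul \<Delta> S act (ksrc r) k'))"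
proof (intro allI)
  fix k k' r
  note m = ml6[OF ml]
  have pt: "\<And>y z. Phi \<phi> (ktens (kmul \<Delta> S act [(1,r,1)] [y]) [z]) = Phi \<phi> (ktens [y] (kmul \<Delta> S act [(r,1,1)] [z]))"
  proof -
    fix y z :: "'a \<times> 'a \<times> 'h"
    obtain a b h where y: "y = (a,b,h)" by (cases y) auto
    obtain a' b' h' where z: "z = (a',b',h')" by (cases z) auto
    have "sw \<Delta> 1 (\<lambda>p1 p2. sw \<Delta> h (\<lambda>g1 g2. \<phi> (1 * act p1 a) (b * act (S g2) r) (p2*g1) a' b' h'))
       = sw \<Delta> h (\<lambda>g1 g2. \<phi> (1 * act 1 a) (b * act (S g2) r) (1*g1) a' b' h')"
      by (rule Sone) (simp add: Alin m)
    also have "\<dots> = \<phi> a b h (r * a') b' h'" using s by (simp add: act_one)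
    also have "\<dots> = sw \<Delta> h' (\<lambda>g1 g2. \<epsilon> g2 * \<phi> a b h (r * a') b' g1)"
      by (rule Cr[symmetric]) (simp add: Alin m)
    also have "\<dots> = sw \<Delta> h' (\<lambda>g1 g2. \<phi> a b h (r * act 1 a') (b' * act (S g2) 1) (1*g1))"
      by (simp add: act_one act_unit ES A.scale_mult_right[symmetric] m)
    also have "\<dots> = sw \<Delta> 1 (\<lambda>p1 p2. sw \<Delta> h' (\<lambda>g1 g2. \<phi> a b h (r * act p1 a') (b' * act (S g2) 1) (p2*g1)))"
      by (rule Sone[symmetric]) (simp add: Alin m)
    finally show "?thesis y z" by (simp add: y z Phi_L Phi_R)
  qed
  show "Phi \<phi> (ktens (kmul \<Delta> S act (ktgt r) k) k') = Phi \<phi> (ktens k (kmul \<Delta> S act (ksrc r) k'))"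
    by (subst Phi_Lgen, subst Phi_Rgen) (simp add: ktgt_def ksrc_def pt)
qed

lemma balAop_from:
  assumes ml: "multilin6 sA sH \<phi>"
    and bal: "\<forall>k k' r. Phi \<phi> (ktens (kmul \<Delta> S act k (ktgt r)) k') = Phi \<phi> (ktens k (kmul \<Delta> S act (ktgt r) k'))"
  shows "\<phi> a (r*b) h a' b' h' = sw \<Delta> h' (\<lambda>g1 g2. \<phi> a b h a' (b' * act (S g2) r) g1)"
proof -
  note m = ml6[OF ml]
  have "\<phi> a (r*b) h a' b' h' = \<phi> a (r * act (S 1) b) h a' b' h'"
    using S1[where F="\<lambda>m. \<phi> a (r * act m b) h a' b' h'"] by (simp add: Alin m act_one)
  also have "\<dots> = sw \<Delta> h (\<lambda>p1 p2. \<epsilon> p1 * \<phi> a (r * act (S 1) b) p2 a' b' h')"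
    by (rule Cl[symmetric]) (simp add: Alin m)
  also have "\<dots> = sw \<Delta> h (\<lambda>p1 p2. \<phi> (a * act p1 1) (r * act (S 1) b) (p2*1) a' b' h')"
    by (simp add: act_unit A.scale_mult_right[symmetric] m)
  also have "\<dots> = sw \<Delta> h (\<lambda>p1 p2. sw \<Delta> 1 (\<lambda>g1 g2. \<phi> (a * act p1 1) (r * act (S g2) b) (p2*g1) a' b' h'))"
    by (subst Sone) (simp_all add: Alin m)
  also have "\<dots> = sw \<Delta> 1 (\<lambda>p1 p2. sw \<Delta> h' (\<lambda>g1 g2. \<phi> a b h (1 * act p1 a') (b' * act (S g2) r) (p2*g1)))"
    using bal[rule_format, of "[(a,b,h)]" r "[(a',b',h')]"] by (simp add: ktgt_def Phi_L Phi_R)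
  also have "\<dots> = sw \<Delta> h' (\<lambda>g1 g2. \<phi> a b h (1 * act 1 a') (b' * act (S g2) r) (1*g1))"
    by (rule Sone) (simp add: Alin m)
  finally show ?thesis by (simp add: act_one)
qed

lemma balAop_to:
  assumes ml: "multilin6 sA sH \<phi>"
    and s: "\<And>a b h a' b' h' r. \<phi> a (r*b) h a' b' h' = sw \<Delta> h' (\<lambda>g1 g2. \<phi> a b h a' (b' * act (S g2) r) g1)"
  shows "\<forall>k k' r. Phi \<phi> (ktens (kmul \<Delta> S act k (ktgt r)) k') = Phi \<phi> (ktens k (kmul \<Delta> S act (ktgt r) k'))"
proof (intro allI)
  fix k k' r
  note m = ml6[OF ml]
  have pt: "\<And>y z. Phi \<phi> (ktens (kmul \<Delta> S act [y] [(1,r,1)]) [z]) = Phi \<phi> (ktens [y] (kmul \<Delta> S act [(1,r,1)] [z]))"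
  proof -
    fix y z :: "'a \<times> 'a \<times> 'h"
    obtain a b h where y: "y = (a,b,h)" by (cases y) auto
    obtain a' b' h' where z: "z = (a',b',h')" by (cases z) auto
    have "sw \<Delta> h (\<lambda>p1 p2. sw \<Delta> 1 (\<lambda>g1 g2. \<phi> (a * act p1 1) (r * act (S g2) b) (p2*g1) a' b' h'))
        = sw \<Delta> h (\<lambda>p1 p2. \<phi> (a * act p1 1) (r * act (S 1) b) (p2*1) a' b' h')"
      by (subst Sone) (simp_all add: Alin m)
    also have "\<dots> = sw \<Delta> h (\<lambda>p1 p2. \<epsilon> p1 * \<phi> a (r * act (S 1) b) p2 a' b' h')"
      by (simp add: act_unit A.scale_mult_right[symmetric] m)
    also have "\<dots> = \<phi> a (r * act (S 1) b) h a' b' h'"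
      by (rule Cl) (simp add: Alin m)
    also have "\<dots> = \<phi> a (r*b) h a' b' h'"
      using S1[where F="\<lambda>m. \<phi> a (r * act m b) h a' b' h'"] by (simp add: Alin m act_one)
    also have "\<dots> = sw \<Delta> h' (\<lambda>g1 g2. \<phi> a b h (1 * act 1 a') (b' * act (S g2) r) (1*g1))"
      using s by (simp add: act_one)
    also have "\<dots> = sw \<Delta> 1 (\<lambda>p1 p2. sw \<Delta> h' (\<lambda>g1 g2. \<phi> a b h (1 * act p1 a') (b' * act (S g2) r) (p2*g1)))"
      by (rule Sone[symmetric]) (simp add: Alin m)
    finally show "?thesis y z" by (simp add: y z Phi_L Phi_R)
  qed
  show "Phi \<phi> (ktens (kmul \<Delta> S act k (ktgt r)) k') = Phi \<phi> (ktens k (kmul \<Delta> S act (ktgt r) k'))"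
    by (subst Phi_Lgen, subst Phi_Rgen) (simp add: ktgt_def pt)
qed

end



lemma e_cases: obtains a b h a' b' h' where "e = ((a,b,h),(a',b',h'))"
proof -
  obtain x y where e: "e = (x,y)" by (cases e)
  obtain a b h where x: "x = (a,b,h)" by (rule prod_cases3)
  obtain a' b' h' where y: "y = (a',b',h')" by (rule prod_cases3)
  show ?thesis using that e x y by blast
qed

lemma Phi_single: "Phi \<phi> [((a,b,h),(a',b',h'))] = \<phi> a b h a' b' h'"
  by (simp add: Phi_def)

context module_alg begin

lemma C1: assumes H: "teqAop sA sH \<Delta> S act xs ys"
  shows "teqA sA sH \<Delta> S act (nu \<Delta> S act xs) (nu \<Delta> S act ys)"
  unfolding teqA_def
proof (intro allI impI)
  fix \<phi> :: "'a\<Rightarrow>'a\<Rightarrow>'h\<Rightarrow>'a\<Rightarrow>'a\<Rightarrow>'h\<Rightarrow>complex"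
  assume "multilin6 sA sH \<phi> \<and> (\<forall>k k' r. Phi \<phi> (ktens (kmul \<Delta> S act (ktgt r) k) k') = Phi \<phi> (ktens k (kmul \<Delta> S act (ksrc r) k')))"
  then have ml: "multilin6 sA sH \<phi>" by blast
  note m = ml6[OF ml]
  define \<psi> where "\<psi> = (\<lambda>a b h a' b' h'. sw \<Delta> h (\<lambda>h1 h2. sw \<Delta> h2 (\<lambda>p1 p2. sw \<Delta> h' (\<lambda>g1 g2.
       \<phi> a 1 h1 (act p1 a') (b' * act (S g2) b) (p2 * g1)))))"
  have eq: "\<And>zs. Phi \<phi> (nu \<Delta> S act zs) = Phi \<psi> zs"
  proof -
    fix zs
    have "\<And>e. Phi \<phi> (nu \<Delta> S act [e]) = Phi \<psi> [e]"
    proof -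
      fix e :: "('a\<times>'a\<times>'h)\<times>('a\<times>'a\<times>'h)"
      obtain a b h a' b' h' where "e = ((a,b,h),(a',b',h'))" by (rule e_cases)
      then show "Phi \<phi> (nu \<Delta> S act [e]) = Phi \<psi> [e]" by (simp add: Phi_nu1 \<psi>_def Phi_single)
    qed
    then show "?thesis zs" by (subst nu_concat, subst Phi_as_sum[of \<psi>]) (simp add: Phi_concat_map)
  qed
  have ml\<psi>: "multilin6 sA sH \<psi>"
    unfolding multilin6_def \<psi>_def by (simp add: Alin m)
  have s\<psi>: "\<And>a b h a' b' h' r. \<psi> a (r*b) h a' b' h' = sw \<Delta> h' (\<lambda>g1 g2. \<psi> a b h a' (b' * act (S g2) r) g1)"
  proof -
    fix a b h a' b' h' r
    have f1: "\<And>h1 p1 p2 g1 g2. \<phi> a 1 h1 (act p1 a') (b' * act (S g2) (r*b)) (p2*g1)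
       = sw \<Delta> g2 (\<lambda>t1 t2. \<phi> a 1 h1 (act p1 a') (b' * (act (S t2) r * act (S t1) b)) (p2*g1))"
    proof -
      fix h1 p1 p2 g1 g2
      have "\<phi> a 1 h1 (act p1 a') (b' * act (S g2) (r*b)) (p2*g1)
         = sw \<Delta> (S g2) (\<lambda>u v. \<phi> a 1 h1 (act p1 a') (b' * (act u r * act v b)) (p2*g1))"
        by (rule actP[where f="\<lambda>z. \<phi> a 1 h1 (act p1 a') (b' * z) (p2*g1)"]) (simp add: Alin m)
      also have "\<dots> = sw \<Delta> g2 (\<lambda>t1 t2. \<phi> a 1 h1 (act p1 a') (b' * (act (S t2) r * act (S t1) b)) (p2*g1))"
        by (rule Santi) (simp add: Alin m)
      finally show "?thesis h1 p1 p2 g1 g2" .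
    qed
    have f2: "\<And>h1 p1 p2. sw \<Delta> h' (\<lambda>g1 g2. sw \<Delta> g2 (\<lambda>t1 t2. \<phi> a 1 h1 (act p1 a') (b' * (act (S t2) r * act (S t1) b)) (p2*g1)))
      = sw \<Delta> h' (\<lambda>x t2. sw \<Delta> x (\<lambda>g1 t1. \<phi> a 1 h1 (act p1 a') (b' * (act (S t2) r * act (S t1) b)) (p2*g1)))"
      by (rule Scoassoc[symmetric]) (simp add: Alin m)
    have r1: "sw \<Delta> h' (\<lambda>g1 g2. \<psi> a b h a' (b' * act (S g2) r) g1) =
       sw \<Delta> h (\<lambda>h1 h2. sw \<Delta> h' (\<lambda>q1 q2. sw \<Delta> h2 (\<lambda>p1 p2. sw \<Delta> q1 (\<lambda>g1 g2.
       \<phi> a 1 h1 (act p1 a') (b' * (act (S q2) r * act (S g2) b)) (p2 * g1)))))"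
      unfolding \<psi>_def mult.assoc by (rule sw_swap)
    have r2: "\<And>h1 h2. sw \<Delta> h' (\<lambda>q1 q2. sw \<Delta> h2 (\<lambda>p1 p2. sw \<Delta> q1 (\<lambda>g1 g2.
       \<phi> a 1 h1 (act p1 a') (b' * (act (S q2) r * act (S g2) b)) (p2 * g1))))
       = sw \<Delta> h2 (\<lambda>p1 p2. sw \<Delta> h' (\<lambda>q1 q2. sw \<Delta> q1 (\<lambda>g1 g2.
       \<phi> a 1 h1 (act p1 a') (b' * (act (S q2) r * act (S g2) b)) (p2 * g1))))"
      by (rule sw_swap)
    show "?thesis a b h a' b' h' r"
      unfolding r1 by (simp only: \<psi>_def f1 f2 r2)
  qed
  have "Phi \<psi> xs = Phi \<psi> ys"
    apply (rule H[unfolded teqAop_def, THEN spec[of _ \<psi>], THEN mp])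
    using ml\<psi> balAop_to[OF ml\<psi> s\<psi>] by (rule conjI)
  then show "Phi \<phi> (nu \<Delta> S act xs) = Phi \<phi> (nu \<Delta> S act ys)" by (simp add: eq)
qed

end



context module_alg begin

lemma ctr_eps: assumes ml: "multilin6 sA sH \<phi>"
  shows "sw \<Delta> z (\<lambda>z1 z2. \<phi> x1 x2 x3 x4 (y * act (S z2) 1) (p * z1)) = \<phi> x1 x2 x3 x4 y (p * z)"
proof -
  note m = ml6[OF ml]
  have "sw \<Delta> z (\<lambda>z1 z2. \<phi> x1 x2 x3 x4 (y * act (S z2) 1) (p * z1)) = sw \<Delta> z (\<lambda>z1 z2. \<epsilon> z2 * \<phi> x1 x2 x3 x4 y (p * z1))"
    by (simp add: act_unit ES A.scale_mult_right[symmetric] m)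
  also have "\<dots> = \<phi> x1 x2 x3 x4 y (p * z)"
    by (rule Cr) (simp add: Alin m)
  finally show ?thesis .
qed

lemma C3: assumes H: "teqA sA sH \<Delta> S act xs ys"
  shows "teqAop sA sH \<Delta> S act (nu_inv \<Delta> S act xs) (nu_inv \<Delta> S act ys)"
  unfolding teqAop_def
proof (intro allI impI)
  fix \<phi> :: "'a\<Rightarrow>'a\<Rightarrow>'h\<Rightarrow>'a\<Rightarrow>'a\<Rightarrow>'h\<Rightarrow>complex"
  assume "multilin6 sA sH \<phi> \<and> (\<forall>k k' r. Phi \<phi> (ktens (kmul \<Delta> S act k (ktgt r)) k') = Phi \<phi> (ktens k (kmul \<Delta> S act (ktgt r) k')))"
  then have ml: "multilin6 sA sH \<phi>" by blast
  note m = ml6[OF ml]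
  define \<psi> where "\<psi> = (\<lambda>a b h a' b' h'. sw \<Delta> h (\<lambda>h1 h2. sw \<Delta> h2 (\<lambda>t1 t2.
       \<phi> a 1 h1 (b * act (S t2) a') b' (S t1 * h'))))"
  have pt: "\<And>a b h a' b' h'. Phi \<phi> (nu_inv \<Delta> S act [((a,b,h),(a',b',h'))]) = \<psi> a b h a' b' h'"
  proof -
    fix a b h a' b' h'
    have p1: "\<And>h1 s1 s2. sw \<Delta> h' (\<lambda>g1 g2. \<phi> a 1 h1 (b * act s1 a') (b' * act (S g2) 1) (s2 * g1))
       = \<phi> a 1 h1 (b * act s1 a') b' (s2 * h')"
      by (rule ctr_eps[OF ml])
    have p2: "\<And>h1 h2. sw \<Delta> (S h2) (\<lambda>s1 s2. \<phi> a 1 h1 (b * act s1 a') b' (s2 * h'))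
       = sw \<Delta> h2 (\<lambda>t1 t2. \<phi> a 1 h1 (b * act (S t2) a') b' (S t1 * h'))"
      by (rule Santi) (simp add: Alin m)
    show "?thesis a b h a' b' h'"
      unfolding Phi_nu_inv1 \<psi>_def by (simp only: p1 p2)
  qed
  have eq: "\<And>zs. Phi \<phi> (nu_inv \<Delta> S act zs) = Phi \<psi> zs"
  proof -
    fix zs
    have "\<And>e. Phi \<phi> (nu_inv \<Delta> S act [e]) = Phi \<psi> [e]"
    proof -
      fix e :: "('a\<times>'a\<times>'h)\<times>('a\<times>'a\<times>'h)"
      obtain a b h a' b' h' where "e = ((a,b,h),(a',b',h'))" by (rule e_cases)
      then show "Phi \<phi> (nu_inv \<Delta> S act [e]) = Phi \<psi> [e]" by (simp add: pt Phi_single)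
    qed
    then show "?thesis zs" by (subst nu_inv_concat, subst Phi_as_sum[of \<psi>]) (simp add: Phi_concat_map)
  qed
  have ml\<psi>: "multilin6 sA sH \<psi>"
    unfolding multilin6_def \<psi>_def by (simp add: Alin m)
  have s\<psi>: "\<And>a b h a' b' h' r. sw \<Delta> h (\<lambda>g1 g2. \<psi> a (b * act (S g2) r) g1 a' b' h') = \<psi> a b h (r*a') b' h'"
  proof -
    fix a b h a' b' h' r
    define W where "W = (\<lambda>h1 t1 u1 u2. \<phi> a 1 h1 (b * (act (S u2) r * act (S u1) a')) b' (S t1 * h'))"
    have q1: "\<And>h1 t1 t2. \<phi> a 1 h1 (b * act (S t2) (r*a')) b' (S t1 * h') = sw \<Delta> t2 (\<lambda>u1 u2. W h1 t1 u1 u2)"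
    proof -
      fix h1 t1 t2
      have "\<phi> a 1 h1 (b * act (S t2) (r*a')) b' (S t1 * h')
         = sw \<Delta> (S t2) (\<lambda>u v. \<phi> a 1 h1 (b * (act u r * act v a')) b' (S t1 * h'))"
        by (rule actP[where f="\<lambda>z. \<phi> a 1 h1 (b * z) b' (S t1 * h')"]) (simp add: Alin m)
      also have "\<dots> = sw \<Delta> t2 (\<lambda>u1 u2. W h1 t1 u1 u2)"
        unfolding W_def by (rule Santi) (simp add: Alin m)
      finally show "?thesis h1 t1 t2" .
    qed
    have q2: "\<And>h1 h2. sw \<Delta> h2 (\<lambda>t1 t2. sw \<Delta> t2 (\<lambda>u1 u2. W h1 t1 u1 u2)) = sw \<Delta> h2 (\<lambda>x u2. sw \<Delta> x (\<lambda>t1 u1. W h1 t1 u1 u2))"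
      by (rule Scoassoc[symmetric]) (simp add: Alin m W_def)
    have q3: "sw \<Delta> h (\<lambda>h1 h2. sw \<Delta> h2 (\<lambda>x u2. sw \<Delta> x (\<lambda>t1 u1. W h1 t1 u1 u2)))
      = sw \<Delta> h (\<lambda>y u2. sw \<Delta> y (\<lambda>h1 x. sw \<Delta> x (\<lambda>t1 u1. W h1 t1 u1 u2)))"
      by (rule Scoassoc[symmetric]) (simp add: Alin m W_def)
    have "\<psi> a b h (r*a') b' h' = sw \<Delta> h (\<lambda>y u2. sw \<Delta> y (\<lambda>h1 x. sw \<Delta> x (\<lambda>t1 u1. W h1 t1 u1 u2)))"
      unfolding \<psi>_def by (simp only: q1 q2 q3)
    also have "\<dots> = sw \<Delta> h (\<lambda>g1 g2. \<psi> a (b * act (S g2) r) g1 a' b' h')"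
      unfolding \<psi>_def W_def by (simp only: mult.assoc)
    finally show "?thesis a b h a' b' h' r" by simp
  qed
  have "Phi \<psi> xs = Phi \<psi> ys"
    apply (rule H[unfolded teqA_def, THEN spec[of _ \<psi>], THEN mp])
    using ml\<psi> balA_to[OF ml\<psi> s\<psi>] by (rule conjI)
  then show "Phi \<phi> (nu_inv \<Delta> S act xs) = Phi \<phi> (nu_inv \<Delta> S act ys)" by (simp add: eq)
qed

end



lemma nu_concat_list: "nu D S act (concat L) = concat (map (nu D S act) L)"
  by (induction L) (simp_all add: nu_append nu_def)
lemma nu_inv_concat_list: "nu_inv D S act (concat L) = concat (map (nu_inv D S act) L)"
  by (induction L) (simp_all add: nu_inv_append nu_inv_def)

lemma Phi_nu_of: "Phi \<phi> (nu D S act ys) = (\<Sum>y\<leftarrow>ys. Phi \<phi> (nu D S act [y]))"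
  by (subst nu_concat) (simp add: Phi_concat_map)
lemma Phi_nu_inv_of: "Phi \<phi> (nu_inv D S act ys) = (\<Sum>y\<leftarrow>ys. Phi \<phi> (nu_inv D S act [y]))"
  by (subst nu_inv_concat) (simp add: Phi_concat_map)

lemma Phi_nu_nuinv1: "Phi (\<phi>::_\<Rightarrow>_\<Rightarrow>_\<Rightarrow>_\<Rightarrow>_\<Rightarrow>_\<Rightarrow>complex) (nu D S act (nu_inv D S act [((a,b,h),(a',b',h'))])) =
   sw D h (\<lambda>h1 h2. sw D (S h2) (\<lambda>s1 s2. sw D h' (\<lambda>g1 g2.
     Phi \<phi> (nu D S act [((a,1,h1),(b * act s1 a', b' * act (S g2) 1, s2*g1))]))))"
  by (subst Phi_nu_of) (simp add: nu_inv_def kmul_def kmul1_def sw_def sum_list_concat' map_concat split_def o_def)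

lemma Phi_nuinv_nu1: "Phi (\<phi>::_\<Rightarrow>_\<Rightarrow>_\<Rightarrow>_\<Rightarrow>_\<Rightarrow>_\<Rightarrow>complex) (nu_inv D S act (nu D S act [((a,b,h),(a',b',h'))])) =
   sw D h (\<lambda>h1 h2. sw D h2 (\<lambda>p1 p2. sw D h' (\<lambda>g1 g2.
     Phi \<phi> (nu_inv D S act [((a,1,h1),(1 * act p1 a', b' * act (S g2) b, p2*g1))]))))"
  by (subst Phi_nu_inv_of) (simp add: nu_def kdelta_def kmul_def kmul1_def sw_def sum_list_concat' map_concat split_def o_def)




context module_alg begin

lemma C4pt:
  assumes ml: "multilin6 sA sH \<phi>"
    and balA: "\<And>a b h a' b' h' r. sw \<Delta> h (\<lambda>g1 g2. \<phi> a (b * act (S g2) r) g1 a' b' h') = \<phi> a b h (r*a') b' h'"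
  shows "Phi \<phi> (nu \<Delta> S act (nu_inv \<Delta> S act [((a,b,h),(a',b',h'))])) = \<phi> a b h a' b' h'"
proof -
  note m = ml6[OF ml]
  define \<Phi> where "\<Phi> = (\<lambda>v1 w1 w2 p2 t1 t2. \<phi> a 1 v1 (act w1 b * act w2 (act (S t2) a')) b' (p2 * (S t1 * h')))"
  define \<Psi> where "\<Psi> = (\<lambda>v1 w1 w2 t2. \<phi> a 1 v1 (act w1 b * act w2 (act (S t2) a')) b' h')"
  have a1: "\<And>h1 s1 s2 g1 g2. Phi \<phi> (nu \<Delta> S act [((a,1,h1),(b * act s1 a', b' * act (S g2) 1, s2*g1))])
     = \<epsilon> g2 * sw \<Delta> h1 (\<lambda>v1 v2. sw \<Delta> v2 (\<lambda>p1 p2. \<phi> a 1 v1 (act p1 (b * act s1 a')) b' (p2 * (s2 * g1))))"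
  proof -
    fix h1 s1 s2 g1 g2
    have "Phi \<phi> (nu \<Delta> S act [((a,1,h1),(b * act s1 a', b' * act (S g2) 1, s2*g1))])
      = sw \<Delta> h1 (\<lambda>v1 v2. sw \<Delta> v2 (\<lambda>p1 p2. \<phi> a 1 v1 (act p1 (b * act s1 a')) (b' * act (S g2) 1) (p2 * (s2 * g1))))"
      by (simp only: Phi_nu1 ctr_eps[OF ml] mult_1_left)
    then show "?thesis h1 s1 s2 g1 g2"
      by (simp add: act_unit ES A.scale_mult_right[symmetric] m)
  qed
  have a2: "\<And>h1 s1 s2. sw \<Delta> h' (\<lambda>g1 g2. \<epsilon> g2 * sw \<Delta> h1 (\<lambda>v1 v2. sw \<Delta> v2 (\<lambda>p1 p2. \<phi> a 1 v1 (act p1 (b * act s1 a')) b' (p2 * (s2 * g1)))))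
     = sw \<Delta> h1 (\<lambda>v1 v2. sw \<Delta> v2 (\<lambda>p1 p2. \<phi> a 1 v1 (act p1 (b * act s1 a')) b' (p2 * (s2 * h'))))"
    by (rule Cr) (simp add: Alin m)
  have a3: "\<And>h1 h2. sw \<Delta> (S h2) (\<lambda>s1 s2. sw \<Delta> h1 (\<lambda>v1 v2. sw \<Delta> v2 (\<lambda>p1 p2. \<phi> a 1 v1 (act p1 (b * act s1 a')) b' (p2 * (s2 * h')))))
     = sw \<Delta> h2 (\<lambda>t1 t2. sw \<Delta> h1 (\<lambda>v1 v2. sw \<Delta> v2 (\<lambda>p1 p2. \<phi> a 1 v1 (act p1 (b * act (S t2) a')) b' (p2 * (S t1 * h')))))"
    by (rule Santi) (simp add: Alin m)
  have a4: "\<And>v1 p1 p2 t1 t2. \<phi> a 1 v1 (act p1 (b * act (S t2) a')) b' (p2 * (S t1 * h'))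
     = sw \<Delta> p1 (\<lambda>w1 w2. \<Phi> v1 w1 w2 p2 t1 t2)"
    unfolding \<Phi>_def by (rule actP[where f="\<lambda>z. \<phi> a 1 v1 z b' (p2 * (S t1 * h'))" for v1 p2 t1]) (simp add: Alin m)
  have "Phi \<phi> (nu \<Delta> S act (nu_inv \<Delta> S act [((a,b,h),(a',b',h'))]))
     = sw \<Delta> h (\<lambda>h1 h2. sw \<Delta> h2 (\<lambda>t1 t2. sw \<Delta> h1 (\<lambda>v1 v2. sw \<Delta> v2 (\<lambda>p1 p2. sw \<Delta> p1 (\<lambda>w1 w2. \<Phi> v1 w1 w2 p2 t1 t2)))))"
    unfolding Phi_nu_nuinv1 by (simp only: a1 a2 a3 a4)
  also have "\<dots> = sw \<Delta> h (\<lambda>h1 h2. sw \<Delta> h1 (\<lambda>v1 v2. sw \<Delta> v2 (\<lambda>p1 p2. sw \<Delta> p1 (\<lambda>w1 w2. sw \<Delta> h2 (\<lambda>t1 t2. \<Phi> v1 w1 w2 p2 t1 t2)))))"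
  proof -
    have d1: "\<And>h1 h2. sw \<Delta> h2 (\<lambda>t1 t2. sw \<Delta> h1 (\<lambda>v1 v2. sw \<Delta> v2 (\<lambda>p1 p2. sw \<Delta> p1 (\<lambda>w1 w2. \<Phi> v1 w1 w2 p2 t1 t2))))
       = sw \<Delta> h1 (\<lambda>v1 v2. sw \<Delta> h2 (\<lambda>t1 t2. sw \<Delta> v2 (\<lambda>p1 p2. sw \<Delta> p1 (\<lambda>w1 w2. \<Phi> v1 w1 w2 p2 t1 t2))))"
      by (rule sw_swap)
    have d2: "\<And>h2 v1 v2. sw \<Delta> h2 (\<lambda>t1 t2. sw \<Delta> v2 (\<lambda>p1 p2. sw \<Delta> p1 (\<lambda>w1 w2. \<Phi> v1 w1 w2 p2 t1 t2)))
       = sw \<Delta> v2 (\<lambda>p1 p2. sw \<Delta> h2 (\<lambda>t1 t2. sw \<Delta> p1 (\<lambda>w1 w2. \<Phi> v1 w1 w2 p2 t1 t2)))"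
      by (rule sw_swap)
    have d3: "\<And>h2 v1 p1 p2. sw \<Delta> h2 (\<lambda>t1 t2. sw \<Delta> p1 (\<lambda>w1 w2. \<Phi> v1 w1 w2 p2 t1 t2))
       = sw \<Delta> p1 (\<lambda>w1 w2. sw \<Delta> h2 (\<lambda>t1 t2. \<Phi> v1 w1 w2 p2 t1 t2))"
      by (rule sw_swap)
    show ?thesis by (simp only: d1 d2 d3)
  qed
  also have "\<dots> = sw \<Delta> h (\<lambda>h1 h2. sw \<Delta> h1 (\<lambda>v1 v2. sw \<Delta> v2 (\<lambda>w1 y. sw \<Delta> y (\<lambda>w2 p2. sw \<Delta> h2 (\<lambda>t1 t2. \<Phi> v1 w1 w2 p2 t1 t2)))))"
  proof -
    have e: "\<And>h2 v1 v2. sw \<Delta> v2 (\<lambda>p1 p2. sw \<Delta> p1 (\<lambda>w1 w2. sw \<Delta> h2 (\<lambda>t1 t2. \<Phi> v1 w1 w2 p2 t1 t2)))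
      = sw \<Delta> v2 (\<lambda>w1 y. sw \<Delta> y (\<lambda>w2 p2. sw \<Delta> h2 (\<lambda>t1 t2. \<Phi> v1 w1 w2 p2 t1 t2)))"
      by (rule Scoassoc) (simp add: Alin m \<Phi>_def)
    show ?thesis by (simp only: e)
  qed
  also have "\<dots> = sw \<Delta> h (\<lambda>v1 z. sw \<Delta> z (\<lambda>v2 h2. sw \<Delta> v2 (\<lambda>w1 y. sw \<Delta> y (\<lambda>w2 p2. sw \<Delta> h2 (\<lambda>t1 t2. \<Phi> v1 w1 w2 p2 t1 t2)))))"
    by (rule Scoassoc) (simp add: Alin m \<Phi>_def)
  also have "\<dots> = sw \<Delta> h (\<lambda>v1 z. sw \<Delta> z (\<lambda>w1 z'. sw \<Delta> z' (\<lambda>y h2. sw \<Delta> y (\<lambda>w2 p2. sw \<Delta> h2 (\<lambda>t1 t2. \<Phi> v1 w1 w2 p2 t1 t2)))))"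
  proof -
    have g: "\<And>v1 z. sw \<Delta> z (\<lambda>v2 h2. sw \<Delta> v2 (\<lambda>w1 y. sw \<Delta> y (\<lambda>w2 p2. sw \<Delta> h2 (\<lambda>t1 t2. \<Phi> v1 w1 w2 p2 t1 t2))))
      = sw \<Delta> z (\<lambda>w1 z'. sw \<Delta> z' (\<lambda>y h2. sw \<Delta> y (\<lambda>w2 p2. sw \<Delta> h2 (\<lambda>t1 t2. \<Phi> v1 w1 w2 p2 t1 t2))))"
      by (rule Scoassoc) (simp add: Alin m \<Phi>_def)
    show ?thesis by (simp only: g)
  qed
  also have "\<dots> = sw \<Delta> h (\<lambda>v1 z. sw \<Delta> z (\<lambda>w1 z'. sw \<Delta> z' (\<lambda>w2 m. sw \<Delta> m (\<lambda>p2 h2. sw \<Delta> h2 (\<lambda>t1 t2. \<Phi> v1 w1 w2 p2 t1 t2)))))"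
  proof -
    have g: "\<And>v1 w1 z'. sw \<Delta> z' (\<lambda>y h2. sw \<Delta> y (\<lambda>w2 p2. sw \<Delta> h2 (\<lambda>t1 t2. \<Phi> v1 w1 w2 p2 t1 t2)))
      = sw \<Delta> z' (\<lambda>w2 m. sw \<Delta> m (\<lambda>p2 h2. sw \<Delta> h2 (\<lambda>t1 t2. \<Phi> v1 w1 w2 p2 t1 t2)))"
      by (rule Scoassoc) (simp add: Alin m \<Phi>_def)
    show ?thesis by (simp only: g)
  qed
  also have "\<dots> = sw \<Delta> h (\<lambda>v1 z. sw \<Delta> z (\<lambda>w1 z'. sw \<Delta> z' (\<lambda>w2 m. sw \<Delta> m (\<lambda>n t2. \<epsilon> n * \<Psi> v1 w1 w2 t2))))"
  proof -
    have i: "\<And>v1 w1 w2 m. sw \<Delta> m (\<lambda>p2 h2. sw \<Delta> h2 (\<lambda>t1 t2. \<Phi> v1 w1 w2 p2 t1 t2))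
       = sw \<Delta> m (\<lambda>n t2. sw \<Delta> n (\<lambda>p2 t1. \<Phi> v1 w1 w2 p2 t1 t2))"
      by (rule Scoassoc[symmetric]) (simp add: Alin m \<Phi>_def)
    have j: "\<And>v1 w1 w2 n t2. sw \<Delta> n (\<lambda>p2 t1. \<Phi> v1 w1 w2 p2 t1 t2) = \<epsilon> n * \<Psi> v1 w1 w2 t2"
    proof -
      fix v1 w1 w2 n t2
      have "sw \<Delta> n (\<lambda>p2 t1. \<Phi> v1 w1 w2 p2 t1 t2) = sw \<Delta> n (\<lambda>p2 t1. \<phi> a 1 v1 (act w1 b * act w2 (act (S t2) a')) b' ((p2 * S t1) * h'))"
        unfolding \<Phi>_def by (simp only: mult.assoc)
      also have "\<dots> = \<epsilon> n * \<phi> a 1 v1 (act w1 b * act w2 (act (S t2) a')) b' (1 * h')"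
        by (rule Ar[where F="\<lambda>x. \<phi> a 1 v1 (act w1 b * act w2 (act (S t2) a')) b' (x * h')"]) (simp add: Alin m)
      finally show "?thesis v1 w1 w2 n t2" by (simp add: \<Psi>_def)
    qed
    show ?thesis by (simp only: i j)
  qed
  also have "\<dots> = sw \<Delta> h (\<lambda>v1 z. sw \<Delta> z (\<lambda>w1 z'. \<epsilon> z' * \<phi> a 1 v1 (act w1 b * a') b' h'))"
  proof -
    have k: "\<And>v1 w1 w2 m. sw \<Delta> m (\<lambda>n t2. \<epsilon> n * \<Psi> v1 w1 w2 t2) = \<Psi> v1 w1 w2 m"
      by (rule Cl) (simp add: Alin m \<Psi>_def)
    have l: "\<And>v1 w1 z'. sw \<Delta> z' (\<lambda>w2 m. \<Psi> v1 w1 w2 m) = \<epsilon> z' * \<phi> a 1 v1 (act w1 b * a') b' h'"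
    proof -
      fix v1 w1 z'
      have "sw \<Delta> z' (\<lambda>w2 m. \<Psi> v1 w1 w2 m) = sw \<Delta> z' (\<lambda>w2 m. \<phi> a 1 v1 (act w1 b * act (w2 * S m) a') b' h')"
        unfolding \<Psi>_def by (simp only: act_mult)
      also have "\<dots> = \<epsilon> z' * \<phi> a 1 v1 (act w1 b * act 1 a') b' h'"
        by (rule Ar[where F="\<lambda>x. \<phi> a 1 v1 (act w1 b * act x a') b' h'"]) (simp add: Alin m)
      finally show "?thesis v1 w1 z'" by (simp add: act_one)
    qed
    show ?thesis by (simp only: k l)
  qed
  also have "\<dots> = sw \<Delta> h (\<lambda>v1 z. \<phi> a 1 v1 (act z b * a') b' h')"
  proof -
    have "\<And>v1 z. sw \<Delta> z (\<lambda>w1 z'. \<epsilon> z' * \<phi> a 1 v1 (act w1 b * a') b' h') = \<phi> a 1 v1 (act z b * a') b' h'"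
      by (rule Cr) (simp add: Alin m)
    then show ?thesis by (simp only:)
  qed
  also have "\<dots> = sw \<Delta> h (\<lambda>v1 z. sw \<Delta> v1 (\<lambda>g1 g2. \<phi> a (act (S g2 * z) b) g1 a' b' h'))"
  proof -
    have "\<And>v1 z. \<phi> a 1 v1 (act z b * a') b' h' = sw \<Delta> v1 (\<lambda>g1 g2. \<phi> a (act (S g2 * z) b) g1 a' b' h')"
    proof -
      fix v1 z
      show "?thesis v1 z" using balA[of v1 a 1 "act z b" a' b' h'] by (simp add: act_mult)
    qed
    then show ?thesis by (simp only:)
  qed
  also have "\<dots> = sw \<Delta> h (\<lambda>g1 y. sw \<Delta> y (\<lambda>g2 z. \<phi> a (act (S g2 * z) b) g1 a' b' h'))"
    by (rule Scoassoc) (simp add: Alin m)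
  also have "\<dots> = sw \<Delta> h (\<lambda>g1 y. \<epsilon> y * \<phi> a b g1 a' b' h')"
  proof -
    have "\<And>g1 y. sw \<Delta> y (\<lambda>g2 z. \<phi> a (act (S g2 * z) b) g1 a' b' h') = \<epsilon> y * \<phi> a (act 1 b) g1 a' b' h'"
      by (rule Al[where F="\<lambda>x. \<phi> a (act x b) g1 a' b' h'" for g1]) (simp add: Alin m)
    then show ?thesis by (simp add: act_one)
  qed
  also have "\<dots> = \<phi> a b h a' b' h'"
    by (rule Cr) (simp add: Alin m)
  finally show ?thesis .
qed


lemma C5pt:
  assumes ml: "multilin6 sA sH \<phi>"
    and balAop: "\<And>a b h a' b' h' r. \<phi> a (r*b) h a' b' h' = sw \<Delta> h' (\<lambda>g1 g2. \<phi> a b h a' (b' * act (S g2) r) g1)"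
  shows "Phi \<phi> (nu_inv \<Delta> S act (nu \<Delta> S act [((a,b,h),(a',b',h'))])) = \<phi> a b h a' b' h'"
proof -
  note m = ml6[OF ml]
  define \<Lambda> where "\<Lambda> = (\<lambda>v1 m1 m2 g1 g2. \<phi> a 1 v1 (act m1 a') (b' * act (S g2) b) (m2 * g1))"
  have b1: "\<And>h1 p1 p2 g1 g2. Phi \<phi> (nu_inv \<Delta> S act [((a,1,h1),(1 * act p1 a', b' * act (S g2) b, p2*g1))])
     = sw \<Delta> h1 (\<lambda>v1 v2. sw \<Delta> (S v2) (\<lambda>s1 s2. \<Lambda> v1 (s1*p1) (s2*p2) g1 g2))"
  proof -
    fix h1 p1 p2 g1 g2
    have "Phi \<phi> (nu_inv \<Delta> S act [((a,1,h1),(1 * act p1 a', b' * act (S g2) b, p2*g1))])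
      = sw \<Delta> h1 (\<lambda>v1 v2. sw \<Delta> (S v2) (\<lambda>s1 s2. \<phi> a 1 v1 (act s1 (act p1 a')) (b' * act (S g2) b) (s2 * (p2 * g1))))"
      by (simp only: Phi_nu_inv1 ctr_eps[OF ml] mult_1_left)
    then show "?thesis h1 p1 p2 g1 g2" by (simp add: \<Lambda>_def act_mult mult.assoc)
  qed
  have "Phi \<phi> (nu_inv \<Delta> S act (nu \<Delta> S act [((a,b,h),(a',b',h'))]))
     = sw \<Delta> h (\<lambda>h1 h2. sw \<Delta> h2 (\<lambda>p1 p2. sw \<Delta> h' (\<lambda>g1 g2. sw \<Delta> h1 (\<lambda>v1 v2. sw \<Delta> (S v2) (\<lambda>s1 s2. \<Lambda> v1 (s1*p1) (s2*p2) g1 g2)))))"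
    unfolding Phi_nuinv_nu1 by (simp only: b1)
  also have "\<dots> = sw \<Delta> h (\<lambda>h1 h2. sw \<Delta> h1 (\<lambda>v1 v2. sw \<Delta> (S v2) (\<lambda>s1 s2. sw \<Delta> h2 (\<lambda>p1 p2. sw \<Delta> h' (\<lambda>g1 g2. \<Lambda> v1 (s1*p1) (s2*p2) g1 g2)))))"
  proof -
    have s1: "\<And>h1 p1 p2. sw \<Delta> h' (\<lambda>g1 g2. sw \<Delta> h1 (\<lambda>v1 v2. sw \<Delta> (S v2) (\<lambda>s1 s2. \<Lambda> v1 (s1*p1) (s2*p2) g1 g2)))
      = sw \<Delta> h1 (\<lambda>v1 v2. sw \<Delta> h' (\<lambda>g1 g2. sw \<Delta> (S v2) (\<lambda>s1 s2. \<Lambda> v1 (s1*p1) (s2*p2) g1 g2)))"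
      by (rule sw_swap)
    have s2: "\<And>h1 h2. sw \<Delta> h2 (\<lambda>p1 p2. sw \<Delta> h1 (\<lambda>v1 v2. sw \<Delta> (S v2) (\<lambda>s1 s2. sw \<Delta> h' (\<lambda>g1 g2. \<Lambda> v1 (s1*p1) (s2*p2) g1 g2))))
      = sw \<Delta> h1 (\<lambda>v1 v2. sw \<Delta> h2 (\<lambda>p1 p2. sw \<Delta> (S v2) (\<lambda>s1 s2. sw \<Delta> h' (\<lambda>g1 g2. \<Lambda> v1 (s1*p1) (s2*p2) g1 g2))))"
      by (rule sw_swap)
    have s3: "\<And>v1 v2 p1 p2. sw \<Delta> h' (\<lambda>g1 g2. sw \<Delta> (S v2) (\<lambda>s1 s2. \<Lambda> v1 (s1*p1) (s2*p2) g1 g2))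
      = sw \<Delta> (S v2) (\<lambda>s1 s2. sw \<Delta> h' (\<lambda>g1 g2. \<Lambda> v1 (s1*p1) (s2*p2) g1 g2))"
      by (rule sw_swap)
    have s4: "\<And>h2 v1 v2. sw \<Delta> h2 (\<lambda>p1 p2. sw \<Delta> (S v2) (\<lambda>s1 s2. sw \<Delta> h' (\<lambda>g1 g2. \<Lambda> v1 (s1*p1) (s2*p2) g1 g2)))
      = sw \<Delta> (S v2) (\<lambda>s1 s2. sw \<Delta> h2 (\<lambda>p1 p2. sw \<Delta> h' (\<lambda>g1 g2. \<Lambda> v1 (s1*p1) (s2*p2) g1 g2)))"
      by (rule sw_swap)
    show ?thesis by (simp only: s1 s2 s3 s4)
  qed
  also have "\<dots> = sw \<Delta> h (\<lambda>h1 h2. sw \<Delta> h1 (\<lambda>v1 v2. sw \<Delta> (S v2 * h2) (\<lambda>m1 m2. sw \<Delta> h' (\<lambda>g1 g2. \<Lambda> v1 m1 m2 g1 g2))))"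
  proof -
    have "\<And>v1 v2 h2. sw \<Delta> (S v2) (\<lambda>s1 s2. sw \<Delta> h2 (\<lambda>p1 p2. sw \<Delta> h' (\<lambda>g1 g2. \<Lambda> v1 (s1*p1) (s2*p2) g1 g2)))
       = sw \<Delta> (S v2 * h2) (\<lambda>m1 m2. sw \<Delta> h' (\<lambda>g1 g2. \<Lambda> v1 m1 m2 g1 g2))"
      by (rule Smult[where G="\<lambda>m1 m2. sw \<Delta> h' (\<lambda>g1 g2. \<Lambda> v1 m1 m2 g1 g2)" for v1, symmetric]) (simp add: Alin m \<Lambda>_def)
    then show ?thesis by (simp only:)
  qed
  also have "\<dots> = sw \<Delta> h (\<lambda>v1 y. sw \<Delta> y (\<lambda>v2 h2. sw \<Delta> (S v2 * h2) (\<lambda>m1 m2. sw \<Delta> h' (\<lambda>g1 g2. \<Lambda> v1 m1 m2 g1 g2))))"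
    by (rule Scoassoc) (simp add: Alin m \<Lambda>_def)
  also have "\<dots> = sw \<Delta> h (\<lambda>v1 y. \<epsilon> y * sw \<Delta> h' (\<lambda>g1 g2. \<Lambda> v1 1 1 g1 g2))"
  proof -
    have "\<And>v1 y. sw \<Delta> y (\<lambda>v2 h2. sw \<Delta> (S v2 * h2) (\<lambda>m1 m2. sw \<Delta> h' (\<lambda>g1 g2. \<Lambda> v1 m1 m2 g1 g2)))
       = \<epsilon> y * sw \<Delta> h' (\<lambda>g1 g2. \<Lambda> v1 1 1 g1 g2)"
    proof -
      fix v1 y
      have "sw \<Delta> y (\<lambda>v2 h2. sw \<Delta> (S v2 * h2) (\<lambda>m1 m2. sw \<Delta> h' (\<lambda>g1 g2. \<Lambda> v1 m1 m2 g1 g2)))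
          = \<epsilon> y * sw \<Delta> 1 (\<lambda>m1 m2. sw \<Delta> h' (\<lambda>g1 g2. \<Lambda> v1 m1 m2 g1 g2))"
        by (rule Al[where F="\<lambda>x. sw \<Delta> x (\<lambda>m1 m2. sw \<Delta> h' (\<lambda>g1 g2. \<Lambda> v1 m1 m2 g1 g2))"]) (simp add: Alin m \<Lambda>_def)
      also have "sw \<Delta> 1 (\<lambda>m1 m2. sw \<Delta> h' (\<lambda>g1 g2. \<Lambda> v1 m1 m2 g1 g2)) = sw \<Delta> h' (\<lambda>g1 g2. \<Lambda> v1 1 1 g1 g2)"
        by (rule Sone) (simp add: Alin m \<Lambda>_def)
      finally show "?thesis v1 y" .
    qed
    then show ?thesis by (simp only:)
  qed
  also have "\<dots> = sw \<Delta> h' (\<lambda>g1 g2. \<Lambda> h 1 1 g1 g2)"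
    by (rule Cr) (simp add: Alin m \<Lambda>_def)
  also have "\<dots> = \<phi> a (b*1) h a' b' h'"
    using balAop[of a b 1 h a' b' h'] by (simp add: \<Lambda>_def act_one)
  finally show ?thesis by simp
qed

end



context module_alg begin

lemma C4: "teqA sA sH \<Delta> S act (nu \<Delta> S act (nu_inv \<Delta> S act xs)) xs"
  unfolding teqA_def
proof (intro allI impI)
  fix \<phi> :: "'a\<Rightarrow>'a\<Rightarrow>'h\<Rightarrow>'a\<Rightarrow>'a\<Rightarrow>'h\<Rightarrow>complex"
  assume A: "multilin6 sA sH \<phi> \<and> (\<forall>k k' r. Phi \<phi> (ktens (kmul \<Delta> S act (ktgt r) k) k') = Phi \<phi> (ktens k (kmul \<Delta> S act (ksrc r) k')))"
  then have ml: "multilin6 sA sH \<phi>" by blast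
  have bal: "\<And>a b h a' b' h' r. sw \<Delta> h (\<lambda>g1 g2. \<phi> a (b * act (S g2) r) g1 a' b' h') = \<phi> a b h (r*a') b' h'"
    using A by (intro balA_from) blast+
  have pt: "\<And>e. Phi \<phi> (nu \<Delta> S act (nu_inv \<Delta> S act [e])) = Phi \<phi> [e]"
  proof -
    fix e :: "('a\<times>'a\<times>'h)\<times>('a\<times>'a\<times>'h)"
    obtain a b h a' b' h' where "e = ((a,b,h),(a',b',h'))" by (rule e_cases)
    then show "Phi \<phi> (nu \<Delta> S act (nu_inv \<Delta> S act [e])) = Phi \<phi> [e]"
      by (simp only: C4pt[OF ml bal] Phi_single)
  qed
  have "Phi \<phi> (nu \<Delta> S act (nu_inv \<Delta> S act xs)) = (\<Sum>e\<leftarrow>xs. Phi \<phi> (nu \<Delta> S act (nu_inv \<Delta> S act [e])))"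
    by (subst nu_inv_concat, subst nu_concat_list) (simp add: Phi_concat_map o_def)
  also have "\<dots> = (\<Sum>e\<leftarrow>xs. Phi \<phi> [e])" by (simp only: pt)
  also have "\<dots> = Phi \<phi> xs" by (rule Phi_as_sum[symmetric])
  finally show "Phi \<phi> (nu \<Delta> S act (nu_inv \<Delta> S act xs)) = Phi \<phi> xs" .
qed

lemma C5: "teqAop sA sH \<Delta> S act (nu_inv \<Delta> S act (nu \<Delta> S act xs)) xs"
  unfolding teqAop_def
proof (intro allI impI)
  fix \<phi> :: "'a\<Rightarrow>'a\<Rightarrow>'h\<Rightarrow>'a\<Rightarrow>'a\<Rightarrow>'h\<Rightarrow>complex"
  assume A: "multilin6 sA sH \<phi> \<and> (\<forall>k k' r. Phi \<phi> (ktens (kmul \<Delta> S act k (ktgt r)) k') = Phi \<phi> (ktens k (kmul \<Delta> S act (ktgt r) k')))"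
  then have ml: "multilin6 sA sH \<phi>" by blast
  have bal: "\<And>a b h a' b' h' r. \<phi> a (r*b) h a' b' h' = sw \<Delta> h' (\<lambda>g1 g2. \<phi> a b h a' (b' * act (S g2) r) g1)"
    using A by (intro balAop_from) blast+
  have pt: "\<And>e. Phi \<phi> (nu_inv \<Delta> S act (nu \<Delta> S act [e])) = Phi \<phi> [e]"
  proof -
    fix e :: "('a\<times>'a\<times>'h)\<times>('a\<times>'a\<times>'h)"
    obtain a b h a' b' h' where "e = ((a,b,h),(a',b',h'))" by (rule e_cases)
    then show "Phi \<phi> (nu_inv \<Delta> S act (nu \<Delta> S act [e])) = Phi \<phi> [e]"
      by (simp only: C5pt[OF ml bal] Phi_single)
  qed
  have "Phi \<phi> (nu_inv \<Delta> S act (nu \<Delta> S act xs)) = (\<Sum>e\<leftarrow>xs. Phi \<phi> (nu_inv \<Delta> S act (nu \<Delta> S act [e])))"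
    by (subst nu_concat, subst nu_inv_concat_list) (simp add: Phi_concat_map o_def)
  also have "\<dots> = (\<Sum>e\<leftarrow>xs. Phi \<phi> [e])" by (simp only: pt)
  also have "\<dots> = Phi \<phi> xs" by (rule Phi_as_sum[symmetric])
  finally show "Phi \<phi> (nu_inv \<Delta> S act (nu \<Delta> S act xs)) = Phi \<phi> xs" .
qed

end

theorem mainTheorem10:
  fixes sH :: "complex \<Rightarrow> 'h::{ring,monoid_mult} \<Rightarrow> 'h"
    and \<Delta> :: "'h \<Rightarrow> ('h \<times> 'h) list"
    and \<epsilon> :: "'h \<Rightarrow> complex"
    and S :: "'h \<Rightarrow> 'h"
    and sA :: "complex \<Rightarrow> 'a::{ring,monoid_mult} \<Rightarrow> 'a"
    and act :: "'h \<Rightarrow> 'a \<Rightarrow> 'a"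
  assumes "module_alg sH \<Delta> \<epsilon> S sA act"
  shows "(\<forall>xs ys. teqAop sA sH \<Delta> S act xs ys
            \<longrightarrow> teqA sA sH \<Delta> S act (nu \<Delta> S act xs) (nu \<Delta> S act ys))
       \<and> (\<forall>xs. teqA sA sH \<Delta> S act (nu_expl \<Delta> S act xs) (nu \<Delta> S act xs))
       \<and> (\<forall>xs ys. teqA sA sH \<Delta> S act xs ys
            \<longrightarrow> teqAop sA sH \<Delta> S act (nu_inv \<Delta> S act xs) (nu_inv \<Delta> S act ys))
       \<and> (\<forall>xs. teqA sA sH \<Delta> S act (nu \<Delta> S act (nu_inv \<Delta> S act xs)) xs)
       \<and> (\<forall>xs. teqAop sA sH \<Delta> S act (nu_inv \<Delta> S act (nu \<Delta> S act xs)) xs)"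
proof -
  interpret module_alg sH \<Delta> \<epsilon> S sA act by (rule assms)
  show ?thesis using C1 C2 C3 C4 C5 by blast
qed


end
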